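(* (Limited Loss Theorem.) Consider any instance of the repairman problem with unit-length time windows, and let $R^*$ be an optimal service run with respect to the untrimmed requests. Then there exists a service run $R$ with respect to the trimmed requests such that $\pi(R) \geq \frac{1}{3}\,\pi(R^* )$.
   Context: Repairman problem: we are given a weighted undirected graph (distances are shortest-path distances) and a set of service requests; each request has a location (a node; several requests may share a node) and a time window $[a,a+1)$ of unit length. A repairman moves in the graph at a fixed given speed, and may start at any location at any time and stop anywhere. He performs a service event for a request when he is at its location during its time window; each request served yields profit 1. A service run is a feasible sequence of service events; its profit $\pi(R)$ is the total profit of the requests it serves. Trimming: divide time at the integer multiples of $1/2$; a period is a time interval from one such division up to but not including the next. Assume no window starts at a division (and all window start times are positive). Each unit window then wholly contains exactly one period, and the trimmed request is the request whose time window is replaced by that period. A service run with respect to trimmed requests serves a request only when at its location during its trimmed window. *)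

theory Defs
  imports Complex_Main
begin

definition is_walk :: "('v \<times> 'v) set \<Rightarrow> 'v list \<Rightarrow> bool" where
  "is_walk E ps \<longleftrightarrow> ps \<noteq> [] \<and> (\<forall>e \<in> set (zip ps (tl ps)). e \<in> E)"

definition walk_length :: "('v \<Rightarrow> 'v \<Rightarrow> real) \<Rightarrow> 'v list \<Rightarrow> real" where
  "walk_length w ps = (\<Sum>(x, y) \<leftarrow> zip ps (tl ps). w x y)"

definition reach_within :: "('v \<times> 'v) set \<Rightarrow> ('v \<Rightarrow> 'v \<Rightarrow> real) \<Rightarrow> 'v \<Rightarrow> 'v \<Rightarrow> real \<Rightarrow> bool" where
  "reach_within E w u v c \<longleftrightarrow>
     (\<exists>ps. is_walk E ps \<and> hd ps = u \<and> last ps = v \<and> walk_length w ps \<le> c)"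

text \<open>A service run is a list of service events (request, time).\<close>
definition is_run ::
  "('v \<times> 'v) set \<Rightarrow> ('v \<Rightarrow> 'v \<Rightarrow> real) \<Rightarrow> real \<Rightarrow> 'r set \<Rightarrow> ('r \<Rightarrow> 'v)
   \<Rightarrow> ('r \<Rightarrow> real) \<Rightarrow> real \<Rightarrow> ('r \<times> real) list \<Rightarrow> bool" where
  "is_run E w s Q loc lo len R \<longleftrightarrow>
     (\<forall>(q, t) \<in> set R. q \<in> Q \<and> lo q \<le> t \<and> t < lo q + len) \<and>
     (\<forall>i. Suc i < length R \<longrightarrow>
        snd (R ! i) \<le> snd (R ! Suc i) \<and>
        reach_within E w (loc (fst (R ! i))) (loc (fst (R ! Suc i)))
                     (s * (snd (R ! Suc i) - snd (R ! i))))"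

text \<open>Profit: number of distinct requests served (profit 1 each).\<close>
definition profit :: "('r \<times> real) list \<Rightarrow> nat" where
  "profit R = card (fst ` set R)"

text \<open>Trimming: the unique period [k/2, (k+1)/2) wholly contained in [a, a+1),
  when 2a is not an integer; it starts at ceiling(2a)/2.\<close>
definition trim_start :: "real \<Rightarrow> real" where
  "trim_start a = real_of_int \<lceil>2 * a\<rceil> / 2"

end

theory Submission
  imports Defs
begin

lemma walk_append:
  assumes "is_walk E ps" "is_walk E qs" "last ps = hd qs"
  shows "is_walk E (ps @ tl qs) \<and> walk_length w (ps @ tl qs) = walk_length w ps + walk_length w qs"
  using assms
proof (induction ps rule: induct_list012)
  case 1 then show ?case by (simp add: is_walk_def)
next
  case (2 x)
  then show ?case by (cases qs) (auto simp: is_walk_def walk_length_def)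
next
  case (3 x y zs)
  have w: "is_walk E (y # zs)" using "3.prems"(1) by (auto simp: is_walk_def)
  have "last (y#zs) = hd qs" using "3.prems"(3) by simp
  from "3.IH"(2)[OF w "3.prems"(2) this] have IH:
    "is_walk E (y # zs @ tl qs) \<and> walk_length w (y # zs @ tl qs) = walk_length w (y # zs) + walk_length w qs"
    by simp
  have e: "(x,y) \<in> E" using "3.prems"(1) by (auto simp: is_walk_def)
  show ?case using IH e
    by (auto simp: is_walk_def walk_length_def)
qed

lemma reach_trans:
  assumes "reach_within E w u v c1" "reach_within E w v x c2"
  shows "reach_within E w u x (c1 + c2)"
proof -
  obtain ps where ps: "is_walk E ps" "hd ps = u" "last ps = v" "walk_length w ps \<le> c1"
    using assms(1) by (auto simp: reach_within_def)
  obtain qs where qs: "is_walk E qs" "hd qs = v" "last qs = x" "walk_length w qs \<le> c2"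
    using assms(2) by (auto simp: reach_within_def)
  have A: "is_walk E (ps @ tl qs) \<and> walk_length w (ps @ tl qs) = walk_length w ps + walk_length w qs"
    using walk_append[OF ps(1) qs(1)] ps qs by simp
  have ne: "ps \<noteq> []" "qs \<noteq> []" using ps(1) qs(1) by (auto simp: is_walk_def)
  have "hd (ps @ tl qs) = u" using ne ps by simp
  moreover have "last (ps @ tl qs) = x"
  proof (cases "tl qs = []")
    case True
    then have "qs = [hd qs]" using ne by (cases qs) auto
    then show ?thesis using True ps qs by (metis append_Nil2 last_ConsL)
  next
    case False
    then show ?thesis using qs ne by (cases qs) auto
  qed
  ultimately show ?thesis unfolding reach_within_def using A ps qs
    by (intro exI[of _ "ps @ tl qs"]) auto
qed

theorem theorem1:
  fixes E :: "('v \<times> 'v) set" and w :: "'v \<Rightarrow> 'v \<Rightarrow> real" and s :: real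
    and Q :: "'r set" and loc :: "'r \<Rightarrow> 'v" and a :: "'r \<Rightarrow> real"
    and Ropt :: "('r \<times> real) list"
  assumes finE: "finite E"
    and symE: "\<And>u v. (u, v) \<in> E \<Longrightarrow> (v, u) \<in> E"
    and symw: "\<And>u v. (u, v) \<in> E \<Longrightarrow> w u v = w v u"
    and posw: "\<And>u v. (u, v) \<in> E \<Longrightarrow> w u v > 0"
    and speed: "s > 0"
    and finQ: "finite Q"
    and startpos: "\<And>q. q \<in> Q \<Longrightarrow> a q > 0"
    and nodiv: "\<And>q. q \<in> Q \<Longrightarrow> 2 * a q \<notin> \<int>"
    and opt_run: "is_run E w s Q loc a 1 Ropt"
    and opt: "\<And>R. is_run E w s Q loc a 1 R \<Longrightarrow> profit R \<le> profit Ropt"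
  shows "\<exists>R. is_run E w s Q loc (\<lambda>q. trim_start (a q)) (1/2) R
             \<and> real (profit R) \<ge> real (profit Ropt) / 3"
proof -
  define rel where "rel = (\<lambda>x y :: 'r \<times> real. snd x \<le> snd y \<and>
      reach_within E w (loc (fst x)) (loc (fst y)) (s * (snd y - snd x)))"
  have tr: "transp rel"
  proof (rule transpI)
    fix x y z assume "rel x y" "rel y z"
    then have "snd x \<le> snd z \<and> reach_within E w (loc (fst x)) (loc (fst z))
        (s * (snd y - snd x) + s * (snd z - snd y))" unfolding rel_def
      using reach_trans[of E w "loc (fst x)" "loc (fst y)" _ "loc (fst z)"] by auto
    then show "rel x z" unfolding rel_def by (simp add: algebra_simps)
  qed
  have succ: "successively rel Ropt"
    using opt_run unfolding is_run_def successively_conv_nth rel_def by blast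
  then have sw: "sorted_wrt rel Ropt" using successively_conv_sorted_wrt[OF tr] by blast
  define cls where "cls = (\<lambda>(q,t::real). \<lfloor>2 * t\<rfloor> - \<lceil>2 * a q\<rceil>)"
  have clsr: "cls x \<in> {-1,0,1}" if "x \<in> set Ropt" for x
  proof -
    obtain q t where x: "x = (q,t)" by (cases x)
    have "a q \<le> t" "t < a q + 1" using opt_run that x unfolding is_run_def by auto
    then have "\<lfloor>2*t\<rfloor> \<ge> \<lceil>2 * a q\<rceil> - 1" "\<lfloor>2*t\<rfloor> \<le> \<lceil>2 * a q\<rceil> + 1"
      by linarith+
    then show ?thesis unfolding cls_def x by auto
  qed
  define S where "S = (\<lambda>j. fst ` set (filter (\<lambda>x. cls x = j) Ropt))"
  have cover: "fst ` set Ropt \<subseteq> S (-1) \<union> S 0 \<union> S 1"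
  proof
    fix q assume "q \<in> fst ` set Ropt"
    then obtain x where "x \<in> set Ropt" "q = fst x" by auto
    moreover have "cls x = -1 \<or> cls x = 0 \<or> cls x = 1" using clsr[OF \<open>x \<in> set Ropt\<close>] by auto
    ultimately show "q \<in> S (-1) \<union> S 0 \<union> S 1" unfolding S_def
      using \<open>x \<in> set Ropt\<close> \<open>q = fst x\<close> by (metis (mono_tags, lifting) UnCI set_filter mem_Collect_eq image_eqI)
  qed
  have "card (fst ` set Ropt) \<le> card (S (-1) \<union> S 0 \<union> S 1)"
    by (rule card_mono[OF _ cover]) (simp add: S_def)
  also have "\<dots> \<le> card (S (-1)) + card (S 0) + card (S 1)"
    by (metis (no_types, lifting) add_le_mono card_Un_le le_refl order_trans)
  finally have csum: "profit Ropt \<le> card (S (-1)) + card (S 0) + card (S 1)"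
    unfolding profit_def .
  obtain j where j: "j \<in> {-1,0,1::int}" "3 * card (S j) \<ge> profit Ropt"
  proof -
    have "\<exists>j\<in>{-1,0,1::int}. 3 * card (S j) \<ge> profit Ropt"
    proof (rule ccontr)
      assume "\<not> ?thesis"
      then have "3 * card (S (-1)) < profit Ropt" "3 * card (S 0) < profit Ropt"
        "3 * card (S 1) < profit Ropt" by auto
      then show False using csum by linarith
    qed
    then show ?thesis using that by blast
  qed
  define R where "R = map (\<lambda>(q,t). (q, t - real_of_int j / 2)) (filter (\<lambda>x. cls x = j) Ropt)"
  have "sorted_wrt rel (filter (\<lambda>x. cls x = j) Ropt)"
    using sw by (simp add: sorted_wrt_filter)
  then have "successively rel (filter (\<lambda>x. cls x = j) Ropt)"
    by (rule successively_if_sorted_wrt)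
  then have sR: "successively rel R"
    unfolding R_def successively_map
    by (rule successively_mono) (auto simp: rel_def algebra_simps)
  have win: "\<forall>(q, t)\<in>set R. q \<in> Q \<and> trim_start (a q) \<le> t \<and> t < trim_start (a q) + 1/2"
  proof
    fix x assume "x \<in> set R"
    then obtain q t where qt: "(q,t) \<in> set Ropt" "cls (q,t) = j" "x = (q, t - real_of_int j / 2)"
      unfolding R_def by auto
    have "q \<in> Q" using opt_run qt(1) unfolding is_run_def by auto
    have f: "\<lfloor>2*t\<rfloor> = \<lceil>2 * a q\<rceil> + j" using qt(2) unfolding cls_def by simp
    have fr: "real_of_int \<lfloor>2*t\<rfloor> = real_of_int \<lceil>2 * a q\<rceil> + real_of_int j" using f by simp
    have "real_of_int \<lfloor>2*t\<rfloor> \<le> 2*t" "2*t < real_of_int \<lfloor>2*t\<rfloor> + 1" by linarith+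
    then have "real_of_int \<lceil>2 * a q\<rceil> / 2 \<le> t - real_of_int j / 2"
      "t - real_of_int j / 2 < real_of_int \<lceil>2 * a q\<rceil> / 2 + 1/2"
      using fr by linarith+
    then show "case x of (q, t) \<Rightarrow> q \<in> Q \<and> trim_start (a q) \<le> t \<and> t < trim_start (a q) + 1/2"
      using qt(3) \<open>q \<in> Q\<close> by (simp add: trim_start_def)
  qed
  have run: "is_run E w s Q loc (\<lambda>q. trim_start (a q)) (1/2) R"
    unfolding is_run_def using win sR unfolding successively_conv_nth rel_def by blast
  have "fst ` set R = S j"
    unfolding R_def S_def by (force simp: image_iff)
  then have "profit R = card (S j)" by (simp add: profit_def)
  then show ?thesis using run j(2)
    by (intro exI[of _ R]) auto
qed

end
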